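(* Let $q$ be a power of an odd prime and let $\lambda\in\mathbb{F}_q$ with $\lambda\neq 0,1,-3$. Let $C_\lambda/\mathbb{F}_q$ be the plane quartic $x^4+y^4+z^4=(\lambda+1)(x^2y^2+y^2z^2+z^2x^2)$ and let $E^{(\lambda+3)}_\lambda/\mathbb{F}_q$ be the elliptic curve $(\lambda+3)y^2=x(x-1)(x-\lambda)$. Then $$\#C_\lambda(\mathbb{F}_q)=3\,\#E^{(\lambda+3)}_\lambda(\mathbb{F}_q)-2q-2.$$
   Context: For such $\lambda$, $C_\lambda$ is a smooth, geometrically irreducible plane curve of genus $3$; $\#X(\mathbb{F}_q)$ denotes the number of $\mathbb{F}_q$-rational points (for the quartic, points of the projective plane curve). *)

theory Defs
  imports Main "HOL-Library.Cardinality"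
begin

definition proj_rel :: "('a::field \<times> 'a \<times> 'a) rel" where
  "proj_rel = {(p, p'). p \<noteq> (0,0,0) \<and> p' \<noteq> (0,0,0) \<and>
      (\<exists>c. c \<noteq> 0 \<and> p' = (c * fst p, c * fst (snd p), c * snd (snd p)))}"

definition proj_zeros :: "('a::field \<times> 'a \<times> 'a \<Rightarrow> 'a) \<Rightarrow> ('a \<times> 'a \<times> 'a) set set" where
  "proj_zeros F = {p. p \<noteq> (0,0,0) \<and> F p = 0} // proj_rel"

end

theory Submission
  imports Defs
begin

definition qchi :: "'a::field \<Rightarrow> int" where
  "qchi x = (if x = 0 then 0 else if (\<exists>u. u^2 = x) then 1 else -1)"

lemma two_ne_zero_odd:
  assumes "odd CARD('a::{field,finite})"
  shows "(2::'a) \<noteq> 0"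
proof
  assume h2: "(2::'a) = 0"
  have one_ne: "(1::'a) \<noteq> 0" by simp
  have m1: "\<And>y::'a. y + 1 + 1 = y" using h2 by (metis add.assoc add.right_neutral one_add_one)
  have "\<And>n (A::'a set). card A = n \<Longrightarrow> (\<forall>x\<in>A. x + 1 \<in> A) \<Longrightarrow> even n"
  proof -
    fix n
    show "\<And>A::'a set. card A = n \<Longrightarrow> (\<forall>x\<in>A. x + 1 \<in> A) \<Longrightarrow> even n"
    proof (induction n rule: less_induct)
      case (less n A)
      show ?case
      proof (cases "A = {}")
        case True then show ?thesis using less by simp
      next
        case False
        then obtain x where x: "x \<in> A" by blast
        define A' where "A' = A - {x, x+1}"
        have ne: "x + 1 \<noteq> x" using one_ne by simp
        have cA: "card A' = n - 2" using less x ne unfolding A'_def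
          by (simp add: card_Diff_subset)
        have n2: "n \<ge> 2"
        proof -
          have "{x, x+1} \<subseteq> A" using less x by auto
          hence "card {x, x+1} \<le> card A" by (intro card_mono) auto
          thus ?thesis using ne less by simp
        qed
        have cl: "\<forall>y\<in>A'. y + 1 \<in> A'"
        proof
          fix y assume y: "y \<in> A'"
          have "y + 1 \<in> A" using y less unfolding A'_def by auto
          moreover have "y + 1 \<noteq> x" proof
            assume "y + 1 = x" hence "y = x + 1" using m1 by (metis)
            thus False using y unfolding A'_def by auto qed
          moreover have "y + 1 \<noteq> x + 1" using y unfolding A'_def by auto
          ultimately show "y + 1 \<in> A'" unfolding A'_def by auto
        qed
        have "even (n - 2)" using less.IH[of "n-2" A'] cA cl n2 by simp
        thus ?thesis using n2 by (simp add: even_diff_nat)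
      qed
    qed
  qed
  from this[of "UNIV" "CARD('a)"] have "even CARD('a)" by simp
  thus False using assms by simp
qed

lemma sq_count:
  fixes a :: "'a::{field,finite}"
  assumes two: "(2::'a::{field,finite}) \<noteq> 0"
  shows "(\<Sum>u\<in>UNIV. of_bool (u^2 = a) :: int) = 1 + qchi a"
proof -
  have "(\<Sum>u\<in>UNIV. of_bool (u^2 = a) :: int) = int (card {u. u^2 = a})" by simp
  also have "\<dots> = 1 + qchi a"
  proof (cases "a = 0")
    case True
    hence "{u. u^2 = a} = {0}" by auto
    thus ?thesis using True by (simp add: qchi_def)
  next
    case False
    show ?thesis
    proof (cases "\<exists>u. u^2 = a")
      case True
      then obtain w where w: "w^2 = a" by blast
      have w0: "w \<noteq> 0" using w False by auto
      have "{u. u^2 = a} = {w, -w}"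
      proof -
        have "\<And>u. u^2 = w^2 \<longleftrightarrow> u = w \<or> u = -w"
          by (metis power2_eq_iff)
        thus ?thesis using w by auto
      qed
      moreover have "w \<noteq> -w"
      proof
        assume "w = -w" hence "w + w = 0" by (metis neg_eq_iff_add_eq_0)
        hence "2 * w = 0" by (simp only: mult_2)
        thus False using two w0 by simp
      qed
      ultimately show ?thesis using False True by (simp add: qchi_def)
    next
      case nf: False
      hence "{u. u^2 = a} = {}" by auto
      thus ?thesis using False nf by (simp add: qchi_def)
    qed
  qed
  finally show ?thesis .
qed

lemma sum_sq:
  fixes g :: "'a::{field,finite} \<Rightarrow> int"
  assumes two: "(2::'a::{field,finite}) \<noteq> 0"
  shows "(\<Sum>x\<in>UNIV. g (x^2)) = (\<Sum>a\<in>UNIV. (1 + qchi a) * (g a :: int))"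
proof -
  have "(\<Sum>a\<in>UNIV. (1 + qchi a) * g a) = (\<Sum>a\<in>UNIV. \<Sum>u\<in>UNIV. of_bool (u^2 = (a::'a)) * g a)"
    by (simp add: sq_count[OF two, symmetric] sum_distrib_right)
  also have "\<dots> = (\<Sum>u\<in>UNIV. \<Sum>a\<in>UNIV. of_bool (u^2 = (a::'a)) * g a)"
    by (rule sum.swap)
  also have "\<dots> = (\<Sum>u\<in>UNIV. g (u^2))"
    by simp
  finally show ?thesis by simp
qed

lemma chi_sum0:
  assumes two: "(2::'a::{field,finite}) \<noteq> 0"
  shows "(\<Sum>a\<in>(UNIV::'a set). qchi a) = 0"
proof -
  have "(\<Sum>x\<in>(UNIV::'a set). (1::int)) = (\<Sum>a\<in>(UNIV::'a set). (1 + qchi a) * 1)"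
    using sum_sq[OF two, of "\<lambda>_. 1"] by simp
  also have "\<dots> = (\<Sum>x\<in>(UNIV::'a set). (1::int)) + (\<Sum>a\<in>(UNIV::'a set). qchi a)"
    by (simp add: sum.distrib)
  finally show ?thesis by simp
qed

lemma sum_affine:
  fixes a b :: "'a::{field,finite}"
  assumes "a \<noteq> 0"
  shows "(\<Sum>x\<in>UNIV. h (a*x+b)) = (\<Sum>x\<in>UNIV. h x)"
  by (rule sum.reindex_bij_witness[of UNIV "\<lambda>y. (y-b)/a" "\<lambda>x. a*x+b"]) (use assms in auto)

lemma sum_inverse:
  "(\<Sum>x\<in>(UNIV::'a::{field,finite} set). h (inverse x)) = (\<Sum>x\<in>UNIV. h x)"
  by (rule sum.reindex_bij_witness[of UNIV "inverse" "inverse"]) auto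

lemma chi_sqmul:
  fixes w b :: "'a::field"
  assumes w0: "w \<noteq> 0"
  shows "qchi (w^2 * b) = qchi b"
proof (cases "b = 0")
  case True then show ?thesis by (simp add: qchi_def)
next
  case False
  have nz: "w^2 * b \<noteq> 0" using w0 False by simp
  have "(\<exists>u. u^2 = w^2 * b) \<longleftrightarrow> (\<exists>u. u^2 = b)"
  proof
    assume "\<exists>u. u^2 = w^2 * b"
    then obtain u where u: "u^2 = w^2 * b" by blast
    have "(u / w)^2 = b" using u w0 by (simp add: power_divide)
    thus "\<exists>u. u^2 = b" by blast
  next
    assume "\<exists>u. u^2 = b"
    then obtain u where u: "u^2 = b" by blast
    have "(w * u)^2 = w^2 * b" using u by (simp add: power_mult_distrib)
    thus "\<exists>u. u^2 = w^2 * b" by blast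
  qed
  thus ?thesis using nz False by (simp add: qchi_def)
qed

lemma chi_range: "qchi x = 0 \<or> qchi x = 1 \<or> qchi x = -1"
  by (simp add: qchi_def)

lemma chi_le1: "qchi x \<le> 1"
  by (simp add: qchi_def)

lemma nonsq_mul:
  fixes n m :: "'a::{field,finite}"
  assumes two: "(2::'a) \<noteq> 0"
    and n0: "n \<noteq> 0" and ns: "\<not> (\<exists>u. u^2 = n)"
    and m0: "m \<noteq> 0" and ms: "\<not> (\<exists>u. u^2 = m)"
  shows "\<exists>u. u^2 = n * m"
proof -
  define sq :: "'a \<Rightarrow> int" where "sq x = of_bool (x \<noteq> 0 \<and> (\<exists>u. u^2 = x))" for x
  define nsq :: "'a \<Rightarrow> int" where "nsq x = of_bool (x \<noteq> 0 \<and> \<not>(\<exists>u. u^2 = x))" for x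
  have chi_eq: "qchi x = sq x - nsq x" for x by (simp add: qchi_def sq_def nsq_def)
  have cn: "qchi n = -1" using n0 ns by (simp add: qchi_def)
  have pt: "qchi (n * x) = nsq x * qchi (n * x) - sq x" for x
  proof (cases "x = 0")
    case True then show ?thesis by (simp add: qchi_def sq_def nsq_def)
  next
    case False
    show ?thesis
    proof (cases "\<exists>u. u^2 = x")
      case True
      then obtain w where w: "w^2 = x" by blast
      hence w0: "w \<noteq> 0" using False by auto
      have "qchi (n * x) = qchi n" using chi_sqmul[OF w0, of n] w by (simp add: mult.commute)
      thus ?thesis using cn False True by (simp add: sq_def nsq_def)
    next
      case nt: False
      thus ?thesis using False by (simp add: sq_def nsq_def)
    qed
  qed
  have s1: "(\<Sum>x\<in>UNIV. qchi (n * x)) = 0"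
    using sum_affine[OF n0, of "qchi" 0] chi_sum0[OF two] by simp
  have s2: "(\<Sum>x\<in>UNIV. sq x - nsq x) = 0"
    using chi_sum0[OF two] by (simp add: chi_eq)
  have "(\<Sum>x\<in>UNIV. nsq x * (1 - qchi (n * x))) =
        - (\<Sum>x\<in>UNIV. sq x - nsq x) - (\<Sum>x\<in>UNIV. qchi (n * x))"
  proof -
    have "(\<Sum>x\<in>UNIV. qchi (n * x)) = (\<Sum>x\<in>UNIV. nsq x * qchi (n * x) - sq x)"
      using pt by (rule sum.cong[OF refl])
    thus ?thesis by (simp add: sum_subtractf algebra_simps)
  qed
  hence z: "(\<Sum>x\<in>UNIV. nsq x * (1 - qchi (n * x))) = 0" using s1 s2 by simp
  have nn: "\<forall>x\<in>UNIV. 0 \<le> nsq x * (1 - qchi (n * x))"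
    by (simp add: nsq_def chi_le1)
  have "nsq m * (1 - qchi (n * m)) = 0"
    using sum_nonneg_eq_0_iff[of UNIV "\<lambda>x. nsq x * (1 - qchi (n * x))"] z nn by simp
  hence "qchi (n * m) = 1" using m0 ms by (simp add: nsq_def)
  show ?thesis
  proof (rule ccontr)
    assume h: "\<not> (\<exists>u. u^2 = n * m)"
    have "qchi (n * m) = -1" using h n0 m0 by (simp add: qchi_def)
    thus False using \<open>qchi (n * m) = 1\<close> by simp
  qed
qed

lemma chi_mult:
  fixes a b :: "'a::{field,finite}"
  assumes two: "(2::'a) \<noteq> 0"
  shows "qchi (a * b) = qchi a * qchi b"
proof (cases "a = 0 \<or> b = 0")
  case True then show ?thesis by (auto simp: qchi_def)
next
  case False
  hence a0: "a \<noteq> 0" and b0: "b \<noteq> 0" by auto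
  show ?thesis
  proof (cases "\<exists>u. u^2 = a")
    case True
    then obtain w where w: "w^2 = a" by blast
    hence w0: "w \<noteq> 0" using a0 by auto
    have "qchi (a * b) = qchi b" using chi_sqmul[OF w0, of b] w by simp
    moreover have "qchi a = 1" using True a0 by (simp add: qchi_def)
    ultimately show ?thesis by simp
  next
    case na: False
    show ?thesis
    proof (cases "\<exists>u. u^2 = b")
      case True
      then obtain w where w: "w^2 = b" by blast
      hence w0: "w \<noteq> 0" using b0 by auto
      have "qchi (a * b) = qchi a" using chi_sqmul[OF w0, of a] w by (simp add: mult.commute)
      moreover have "qchi b = 1" using True b0 by (simp add: qchi_def)
      ultimately show ?thesis by simp
    next
      case nb: False
      have "\<exists>u. u^2 = a * b" by (rule nonsq_mul[OF two a0 na b0 nb])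
      hence "qchi (a * b) = 1" using a0 b0 by (simp add: qchi_def)
      moreover have "qchi a = -1" "qchi b = -1" using a0 b0 na nb by (simp_all add: qchi_def)
      ultimately show ?thesis by simp
    qed
  qed
qed

lemma chi_sq1: "x \<noteq> 0 \<Longrightarrow> qchi (x^2) = 1"
  by (auto simp: qchi_def)

lemma chi_sqr: "x \<noteq> 0 \<Longrightarrow> qchi x * qchi x = 1"
  by (auto simp: qchi_def)

lemma chi_one: "qchi (1::'a::field) = 1"
proof -
  have "\<exists>u::'a. u^2 = 1" by (rule exI[of _ 1]) simp
  thus ?thesis by (simp add: qchi_def)
qed

lemma chi_4: assumes two: "(2::'a::{field,finite}) \<noteq> 0" shows "qchi (4 * x :: 'a) = qchi x"
proof -
  have "(4::'a) = 2^2" by simp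
  hence "qchi (4 * x) = qchi (2^2 * x)" by simp
  also have "\<dots> = qchi x" by (rule chi_sqmul[OF two])
  finally show ?thesis .
qed

lemma quad_count:
  fixes A B C :: "'a::{field,finite}"
  assumes two: "(2::'a) \<noteq> 0" and A0: "A \<noteq> 0"
  shows "(\<Sum>c\<in>UNIV. of_bool (A*c^2 + B*c + C = 0) :: int) = 1 + qchi (B^2 - 4*A*C)"
proof -
  have fA: "4 * A \<noteq> 0" using two A0 by (metis mult_eq_0_iff power2_eq_square numeral_Bit0_eq_double mult_2 one_add_one) 
  have eq: "A*c^2 + B*c + C = 0 \<longleftrightarrow> (2*A*c + B)^2 = B^2 - 4*A*C" for c
  proof -
    have "(2*A*c + B)^2 - (B^2 - 4*A*C) = (4*A) * (A*c^2 + B*c + C)"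
      by (simp add: power2_eq_square algebra_simps)
    thus ?thesis using fA by (metis eq_iff_diff_eq_0 mult_eq_0_iff)
  qed
  have "(\<Sum>c\<in>UNIV. of_bool (A*c^2 + B*c + C = 0) :: int)
      = (\<Sum>c\<in>UNIV. of_bool ((2*A*c + B)^2 = B^2 - 4*A*C))"
    by (simp add: eq)
  also have "\<dots> = (\<Sum>u\<in>UNIV. of_bool (u^2 = B^2 - 4*A*C))"
    using sum_affine[of "2*A" "\<lambda>u. of_bool (u^2 = B^2 - 4*A*C) :: int" B] two A0 by simp
  also have "\<dots> = 1 + qchi (B^2 - 4*A*C)" by (rule sq_count[OF two])
  finally show ?thesis .
qed

lemma chi_shift_sum:
  fixes d :: "'a::{field,finite}"
  assumes two: "(2::'a) \<noteq> 0" and d0: "d \<noteq> 0"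
  shows "(\<Sum>u\<in>UNIV. qchi (u^2 - d)) = -1"
proof -
  have "(\<Sum>u\<in>UNIV. qchi (u^2 - d)) = (\<Sum>v\<in>UNIV. (1 + qchi v) * qchi (v - d))"
    by (rule sum_sq[OF two])
  also have "\<dots> = (\<Sum>v\<in>UNIV. qchi (v - d)) + (\<Sum>v\<in>UNIV. qchi v * qchi (v - d))"
    by (simp add: distrib_right sum.distrib)
  also have "(\<Sum>v\<in>UNIV. qchi v * qchi (v - d)) = (\<Sum>v\<in>UNIV. qchi (v * (v - d)))"
    by (simp add: chi_mult[OF two])
  also have "(\<Sum>v\<in>UNIV. qchi (v - d)) = 0"
    using sum_affine[of 1 qchi "-d"] chi_sum0[OF two] by simp
  also have "(\<Sum>v\<in>UNIV. qchi (v * (v - d))) = (\<Sum>w\<in>UNIV. qchi (inverse w * (inverse w - d)))"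
    by (rule sum_inverse[symmetric])
  also have "\<dots> = (\<Sum>w\<in>UNIV. qchi ((-d) * w + 1) - of_bool (w = 0))"
  proof (rule sum.cong[OF refl])
    fix w :: 'a
    show "qchi (inverse w * (inverse w - d)) = qchi ((-d) * w + 1) - of_bool (w = 0)"
    proof (cases "w = 0")
      case True then show ?thesis by (simp add: chi_one, simp add: qchi_def)
    next
      case False
      have "inverse w * (inverse w - d) = (inverse w)^2 * ((-d) * w + 1)"
        using False by (simp add: power2_eq_square field_simps)
      hence "qchi (inverse w * (inverse w - d)) = qchi ((-d) * w + 1)"
        using chi_sqmul[of "inverse w" "(-d) * w + 1"] False by simp
      thus ?thesis using False by simp
    qed
  qed
  also have "\<dots> = (\<Sum>w\<in>UNIV. qchi ((-d) * w + 1)) - 1"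
    by (simp add: sum_subtractf)
  also have "(\<Sum>w\<in>UNIV. qchi ((-d) * w + 1)) = 0"
    using sum_affine[of "-d" qchi 1] d0 chi_sum0[OF two] by simp
  finally show ?thesis by simp
qed

lemma chi_quad_sum:
  fixes A B C :: "'a::{field,finite}"
  assumes two: "(2::'a) \<noteq> 0" and A0: "A \<noteq> 0" and D0: "B^2 - 4*A*C \<noteq> 0"
  shows "(\<Sum>s\<in>UNIV. qchi (A*s^2 + B*s + C)) = - qchi A"
proof -
  have "qchi A * (\<Sum>s\<in>UNIV. qchi (A*s^2 + B*s + C)) = (\<Sum>s\<in>UNIV. qchi (4 * (A * (A*s^2 + B*s + C))))"
    by (simp add: sum_distrib_left chi_mult[OF two] chi_4[OF two, of 1, simplified] chi_one)
  also have "\<dots> = (\<Sum>s\<in>UNIV. qchi ((2*A*s + B)^2 - (B^2 - 4*A*C)))"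
    by (rule sum.cong[OF refl]) (simp add: power2_eq_square algebra_simps)
  also have "\<dots> = (\<Sum>u\<in>UNIV. qchi (u^2 - (B^2 - 4*A*C)))"
    using sum_affine[of "2*A" "\<lambda>u. qchi (u^2 - (B^2 - 4*A*C))" B] two A0 by simp
  also have "\<dots> = -1" by (rule chi_shift_sum[OF two D0])
  finally have h: "qchi A * (\<Sum>s\<in>UNIV. qchi (A*s^2 + B*s + C)) = -1" .
  have "(\<Sum>s\<in>UNIV. qchi (A*s^2 + B*s + C)) = qchi A * (qchi A * (\<Sum>s\<in>UNIV. qchi (A*s^2 + B*s + C)))"
    using chi_sqr[OF A0] by (simp add: mult.assoc[symmetric])
  thus ?thesis using h by simp
qed

lemma proj_rel_iff: "(p, p') \<in> proj_rel \<longleftrightarrow> p \<noteq> (0,0,0) \<and> p' \<noteq> (0,0,0) \<and>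
      (\<exists>c. c \<noteq> 0 \<and> p' = (c * fst p, c * fst (snd p), c * snd (snd p)))"
  by (simp add: proj_rel_def)

lemma proj_equiv: "equiv {p::('a::field \<times> 'a \<times> 'a). p \<noteq> (0,0,0)} proj_rel"
proof -
  have "refl_on {p::('a \<times> 'a \<times> 'a). p \<noteq> (0,0,0)} proj_rel"
    unfolding refl_on_def proj_rel_def by (auto intro!: exI[of _ 1])
  moreover have "sym (proj_rel :: (('a \<times> 'a \<times> 'a) \<times> _) set)"
  proof (rule symI)
    fix p p' :: "'a \<times> 'a \<times> 'a"
    assume "(p, p') \<in> proj_rel"
    then obtain c where c: "c \<noteq> 0" "p' = (c * fst p, c * fst (snd p), c * snd (snd p))"
      and nz: "p \<noteq> (0,0,0)" "p' \<noteq> (0,0,0)" using proj_rel_iff by blast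
    have "p = (inverse c * fst p', inverse c * fst (snd p'), inverse c * snd (snd p'))"
      using c by (cases p) auto
    thus "(p', p) \<in> proj_rel" using nz c unfolding proj_rel_def
      by (auto intro!: exI[of _ "inverse c"])
  qed
  moreover have "trans (proj_rel :: (('a \<times> 'a \<times> 'a) \<times> _) set)"
  proof (rule transI)
    fix p p' p'' :: "'a \<times> 'a \<times> 'a"
    assume "(p, p') \<in> proj_rel" "(p', p'') \<in> proj_rel"
    then obtain c d where c: "c \<noteq> 0" "p' = (c * fst p, c * fst (snd p), c * snd (snd p))"
      and d: "d \<noteq> 0" "p'' = (d * fst p', d * fst (snd p'), d * snd (snd p'))"
      and nz: "p \<noteq> (0,0,0)" "p'' \<noteq> (0,0,0)" using proj_rel_iff by metis
    have "p'' = ((d*c) * fst p, (d*c) * fst (snd p), (d*c) * snd (snd p))"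
      using c d by (simp add: mult.assoc)
    thus "(p, p'') \<in> proj_rel" using nz c d unfolding proj_rel_def
      by (auto intro!: exI[of _ "d*c"])
  qed
  moreover have "proj_rel \<subseteq> {p::('a \<times> 'a \<times> 'a). p \<noteq> (0,0,0)} \<times> {p. p \<noteq> (0,0,0)}"
    unfolding proj_rel_def by auto
  ultimately show ?thesis unfolding equiv_def by blast
qed

lemma proj_class:
  fixes p :: "'a::field \<times> 'a \<times> 'a"
  assumes "p \<noteq> (0,0,0)"
  shows "proj_rel `` {p} = (\<lambda>c. (c * fst p, c * fst (snd p), c * snd (snd p))) ` (UNIV - {0})"
proof
  show "proj_rel `` {p} \<subseteq> (\<lambda>c. (c * fst p, c * fst (snd p), c * snd (snd p))) ` (UNIV - {0})"
    unfolding proj_rel_def by auto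
  show "(\<lambda>c. (c * fst p, c * fst (snd p), c * snd (snd p))) ` (UNIV - {0}) \<subseteq> proj_rel `` {p}"
  proof
    fix q assume "q \<in> (\<lambda>c. (c * fst p, c * fst (snd p), c * snd (snd p))) ` (UNIV - {0})"
    then obtain c where c: "c \<noteq> 0" "q = (c * fst p, c * fst (snd p), c * snd (snd p))" by auto
    have "q \<noteq> (0,0,0)" using c assms by (cases p) auto
    thus "q \<in> proj_rel `` {p}" using c assms unfolding proj_rel_def by auto
  qed
qed

lemma proj_class_card:
  fixes p :: "'a::{field,finite} \<times> 'a \<times> 'a"
  assumes "p \<noteq> (0,0,0)"
  shows "card (proj_rel `` {p}) = CARD('a) - 1"
proof -
  have inj: "inj_on (\<lambda>c. (c * fst p, c * fst (snd p), c * snd (snd p))) (UNIV - {0})"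
  proof (rule inj_onI)
    fix c d :: 'a
    assume "(c * fst p, c * fst (snd p), c * snd (snd p)) = (d * fst p, d * fst (snd p), d * snd (snd p))"
    hence e: "c * fst p = d * fst p" "c * fst (snd p) = d * fst (snd p)" "c * snd (snd p) = d * snd (snd p)"
      by auto
    show "c = d"
    proof (cases "fst p = 0")
      case False thus ?thesis using e(1) by simp
    next
      case f1: True
      show ?thesis
      proof (cases "fst (snd p) = 0")
        case False thus ?thesis using e(2) by simp
      next
        case True
        hence "snd (snd p) \<noteq> 0" using f1 assms by (cases p) auto
        thus ?thesis using e(3) by simp
      qed
    qed
  qed
  have "card (proj_rel `` {p}) = card (UNIV - {0::'a})"
    using proj_class[OF assms] card_image[OF inj] by simp
  also have "\<dots> = CARD('a) - 1" by (simp add: card_Diff_subset)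
  finally show ?thesis .
qed

lemma proj_count:
  fixes F :: "'a::{field,finite} \<times> 'a \<times> 'a \<Rightarrow> 'a"
  assumes hom: "\<And>c x y z. c \<noteq> 0 \<Longrightarrow> F (c*x, c*y, c*z) = 0 \<longleftrightarrow> F (x,y,z) = 0"
  shows "card (proj_zeros F) * (CARD('a) - 1) = card {p. p \<noteq> (0,0,0) \<and> F p = 0}"
proof -
  define Z where "Z = {p. p \<noteq> (0,0,0) \<and> F p = 0}"
  define N where "N = {p::'a \<times> 'a \<times> 'a. p \<noteq> (0,0,0)}"
  have eqv: "equiv N proj_rel" unfolding N_def by (rule proj_equiv)
  have sub: "proj_rel `` {p} \<subseteq> Z" if "p \<in> Z" for p
  proof
    fix q assume "q \<in> proj_rel `` {p}"
    then obtain c where c: "c \<noteq> 0" "q = (c * fst p, c * fst (snd p), c * snd (snd p))"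
      and qn: "q \<noteq> (0,0,0)" using proj_rel_iff by blast
    have "F q = 0" using hom[OF c(1), of "fst p" "fst (snd p)" "snd (snd p)"] c that
      unfolding Z_def by (cases p) auto
    thus "q \<in> Z" using qn unfolding Z_def by simp
  qed
  have pz: "proj_zeros F = Z // proj_rel" unfolding proj_zeros_def Z_def by simp
  have un: "\<Union> (Z // proj_rel) = Z"
  proof
    show "\<Union> (Z // proj_rel) \<subseteq> Z" unfolding quotient_def using sub by blast
    show "Z \<subseteq> \<Union> (Z // proj_rel)"
    proof
      fix p assume p: "p \<in> Z"
      have "(p, p) \<in> proj_rel" using p unfolding Z_def
        by (auto simp: proj_rel_iff intro!: exI[of _ 1])
      hence "p \<in> proj_rel `` {p}" by simp
      thus "p \<in> \<Union> (Z // proj_rel)" using p unfolding quotient_def by blast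
    qed
  qed
  have ZN: "Z // proj_rel \<subseteq> N // proj_rel" unfolding quotient_def Z_def N_def by blast
  have pw: "pairwise disjnt (Z // proj_rel)"
    unfolding pairwise_def disjnt_def using quotient_disj[OF eqv] ZN by blast
  have "card Z = sum card (Z // proj_rel)"
    using card_Union_disjoint[OF pw] un by simp
  also have "\<dots> = sum (\<lambda>_. CARD('a) - 1) (Z // proj_rel)"
  proof (rule sum.cong[OF refl])
    fix X assume "X \<in> Z // proj_rel"
    then obtain p where p: "p \<in> Z" "X = proj_rel `` {p}" unfolding quotient_def by blast
    hence "p \<noteq> (0,0,0)" unfolding Z_def by simp
    thus "card X = CARD('a) - 1" using proj_class_card[of p] p(2) by simp
  qed
  also have "\<dots> = card (Z // proj_rel) * (CARD('a) - 1)" by simp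
  finally show ?thesis using pz Z_def by simp
qed

lemma sum_if0:
  "(\<Sum>x\<in>(UNIV::'a::{field,finite} set). if x = 0 then X else Y) = X + (int CARD('a) - 1) * (Y::int)"
proof -
  have "(\<Sum>x\<in>(UNIV::'a set). if x = 0 then X else Y) = (\<Sum>x\<in>(UNIV::'a set). Y + of_bool (x = 0) * (X - Y))"
    by (rule sum.cong) auto
  also have "\<dots> = int CARD('a) * Y + (X - Y)"
    by (simp add: sum.distrib)
  finally show ?thesis by (simp add: algebra_simps)
qed

lemma card3:
  "int (card {p::'a::finite \<times> 'b::finite \<times> 'c::finite. P p}) = (\<Sum>x\<in>UNIV. \<Sum>y\<in>UNIV. \<Sum>z\<in>UNIV. of_bool (P (x,y,z)))"
proof -
  have "int (card {p. P p}) = (\<Sum>p\<in>UNIV. of_bool (P p))" by simp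
  also have "\<dots> = (\<Sum>p\<in>UNIV \<times> (UNIV \<times> UNIV). of_bool (P p))" by (simp only: UNIV_Times_UNIV)
  also have "\<dots> = (\<Sum>x\<in>UNIV. \<Sum>yz\<in>UNIV \<times> UNIV. of_bool (P (x,yz)))"
    by (subst sum.cartesian_product) simp
  also have "\<dots> = (\<Sum>x\<in>UNIV. \<Sum>y\<in>UNIV. \<Sum>z\<in>UNIV. of_bool (P (x,y,z)))"
    by (subst sum.cartesian_product) simp
  finally show ?thesis .
qed

lemma sum3_rot:
  fixes f :: "'a::finite \<Rightarrow> 'a \<Rightarrow> 'a \<Rightarrow> int"
  shows "(\<Sum>a\<in>UNIV. \<Sum>b\<in>UNIV. \<Sum>c\<in>UNIV. f a b c) = (\<Sum>a\<in>UNIV. \<Sum>b\<in>UNIV. \<Sum>c\<in>UNIV. f b c a)"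
proof -
  have "\<And>a. (\<Sum>b\<in>UNIV. \<Sum>c\<in>UNIV. f a b c) = (\<Sum>c\<in>UNIV. \<Sum>b\<in>UNIV. f a b c)"
    by (rule sum.swap)
  hence "(\<Sum>a\<in>UNIV. \<Sum>b\<in>UNIV. \<Sum>c\<in>UNIV. f a b c) = (\<Sum>a\<in>UNIV. \<Sum>c\<in>UNIV. \<Sum>b\<in>UNIV. f a b c)"
    by simp
  also have "\<dots> = (\<Sum>c\<in>UNIV. \<Sum>a\<in>UNIV. \<Sum>b\<in>UNIV. f a b c)"
    by (rule sum.swap)
  finally show ?thesis .
qed

lemma sum3_sq:
  fixes g :: "'a::{field,finite} \<Rightarrow> 'a \<Rightarrow> 'a \<Rightarrow> int"
  assumes two: "(2::'a) \<noteq> 0"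
  shows "(\<Sum>x\<in>UNIV. \<Sum>y\<in>UNIV. \<Sum>z\<in>UNIV. g (x^2) (y^2) (z^2)) =
         (\<Sum>a\<in>UNIV. \<Sum>b\<in>UNIV. \<Sum>c\<in>UNIV. (1 + qchi a) * (1 + qchi b) * (1 + qchi c) * g a b c)"
proof -
  have "(\<Sum>x\<in>UNIV. \<Sum>y\<in>UNIV. \<Sum>z\<in>UNIV. g (x^2) (y^2) (z^2)) =
        (\<Sum>x\<in>UNIV. \<Sum>y\<in>UNIV. \<Sum>c\<in>UNIV. (1 + qchi c) * g (x^2) (y^2) c)"
    by (simp add: sum_sq[OF two])
  also have "\<dots> = (\<Sum>x\<in>UNIV. \<Sum>b\<in>UNIV. (1 + qchi b) * (\<Sum>c\<in>UNIV. (1 + qchi c) * g (x^2) b c))"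
    by (rule sum.cong[OF refl], rule sum_sq[OF two])
  also have "\<dots> = (\<Sum>a\<in>UNIV. (1 + qchi a) * (\<Sum>b\<in>UNIV. (1 + qchi b) * (\<Sum>c\<in>UNIV. (1 + qchi c) * g a b c)))"
    by (rule sum_sq[OF two])
  also have "\<dots> = (\<Sum>a\<in>UNIV. \<Sum>b\<in>UNIV. \<Sum>c\<in>UNIV. (1 + qchi a) * (1 + qchi b) * (1 + qchi c) * g a b c)"
    by (simp add: sum_distrib_left mult.assoc)
  finally show ?thesis .
qed

lemma sum_scale:
  fixes t :: "'a::{field,finite}"
  assumes t0: "t \<noteq> 0"
  shows "(\<Sum>x\<in>UNIV. h (t*x)) = (\<Sum>x\<in>UNIV. h x)"
  using sum_affine[OF t0, of h 0] by simp

lemma sum3_scale: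
  fixes f :: "'a::{field,finite} \<Rightarrow> 'a \<Rightarrow> 'a \<Rightarrow> int"
  assumes t0: "t \<noteq> 0"
  shows "(\<Sum>a\<in>UNIV. \<Sum>b\<in>UNIV. \<Sum>c\<in>UNIV. f (t*a) (t*b) (t*c)) = (\<Sum>a\<in>UNIV. \<Sum>b\<in>UNIV. \<Sum>c\<in>UNIV. f a b c)"
proof -
  have 1: "\<And>a b. (\<Sum>c\<in>UNIV. f (t*a) (t*b) (t*c)) = (\<Sum>c\<in>UNIV. f (t*a) (t*b) c)"
    by (rule sum_scale[OF t0])
  have 2: "\<And>a. (\<Sum>b\<in>UNIV. \<Sum>c\<in>UNIV. f (t*a) (t*b) c) = (\<Sum>b\<in>UNIV. \<Sum>c\<in>UNIV. f (t*a) b c)"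
    by (rule sum_scale[OF t0])
  have 3: "(\<Sum>a\<in>UNIV. \<Sum>b\<in>UNIV. \<Sum>c\<in>UNIV. f (t*a) b c) = (\<Sum>a\<in>UNIV. \<Sum>b\<in>UNIV. \<Sum>c\<in>UNIV. f a b c)"
    by (rule sum_scale[OF t0])
  show ?thesis by (simp only: 1 2 3)
qed

lemma exists_nonsq:
  assumes two: "(2::'a::{field,finite}) \<noteq> 0"
  shows "\<exists>t::'a. qchi t = -1"
proof (rule ccontr)
  assume "\<not> ?thesis"
  hence h: "\<forall>t::'a. qchi t \<ge> 0" using chi_range by (metis le_less neg_0_less_iff_less zero_less_one not_less)
  have "(\<Sum>t\<in>(UNIV::'a set). qchi t) = 0" by (rule chi_sum0[OF two])
  hence "\<forall>t\<in>(UNIV::'a set). qchi t = 0" using h by (simp add: sum_nonneg_eq_0_iff)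
  hence "qchi (1::'a) = 0" by simp
  thus False by (simp add: chi_one)
qed

definition Qf :: "'a::field \<Rightarrow> 'a \<Rightarrow> 'a \<Rightarrow> 'a \<Rightarrow> 'a" where
  "Qf m a b c = a^2 + b^2 + c^2 - m * (a*b + b*c + c*a)"

definition Dq :: "'a::field \<Rightarrow> 'a \<Rightarrow> 'a \<Rightarrow> 'a" where
  "Dq m a b = m^2 * (a+b)^2 - 4 * (a^2 + b^2 - m*a*b)"

lemma inner_c:
  fixes m a b :: "'a::{field,finite}"
  assumes two: "(2::'a) \<noteq> 0"
  shows "(\<Sum>c\<in>UNIV. of_bool (Qf m a b c = 0) :: int) = 1 + qchi (Dq m a b)"
proof -
  have e: "Qf m a b c = 1*c^2 + (-(m*(a+b)))*c + (a^2+b^2-m*a*b)" for c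
    by (simp add: Qf_def power2_eq_square algebra_simps)
  have d: "(-(m*(a+b)))^2 - 4*1*(a^2+b^2-m*a*b) = Dq m a b"
    by (simp add: Dq_def power2_eq_square algebra_simps)
  show ?thesis using quad_count[OF two, of 1 "-(m*(a+b))" "a^2+b^2-m*a*b"]
    by (simp only: e d) simp
qed

lemma Dq_scale: "Dq m a (a*s) = a^2 * Dq m 1 s"
  by (simp add: Dq_def power2_eq_square algebra_simps)

lemma Dq_one: "Dq m 1 s = (m^2-4)*s^2 + (2*m^2+4*m)*s + (m^2-4)"
  by (simp add: Dq_def power2_eq_square algebra_simps)

lemma Dq_zero: "Dq m 0 b = (m^2-4) * b^2"
  by (simp add: Dq_def power2_eq_square algebra_simps)

lemma P0:
  fixes m :: "'a::{field,finite}"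
  assumes two: "(2::'a) \<noteq> 0" and A0: "m^2 - 4 \<noteq> 0"
    and D0: "(2*m^2+4*m)^2 - 4*(m^2-4)*(m^2-4) \<noteq> 0"
  shows "(\<Sum>a\<in>(UNIV::'a set). \<Sum>b\<in>UNIV. \<Sum>c\<in>UNIV. of_bool (Qf m a b c = 0) :: int) = int CARD('a) ^ 2"
proof -
  have "(\<Sum>a\<in>(UNIV::'a set). \<Sum>b\<in>UNIV. \<Sum>c\<in>UNIV. of_bool (Qf m a b c = 0) :: int)
      = (\<Sum>a\<in>(UNIV::'a set). \<Sum>b\<in>(UNIV::'a set). 1 + qchi (Dq m a b))"
    by (simp add: inner_c[OF two])
  also have "\<dots> = (\<Sum>a\<in>(UNIV::'a set). int CARD('a) + (\<Sum>b\<in>UNIV. qchi (Dq m a b)))"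
    by (simp add: sum.distrib)
  also have "\<dots> = (\<Sum>a\<in>(UNIV::'a set). int CARD('a) +
        (if a = 0 then (int CARD('a) - 1) * qchi (m^2-4) else - qchi (m^2-4)))"
  proof (rule sum.cong[OF refl])
    fix a :: 'a
    show "int CARD('a) + (\<Sum>b\<in>UNIV. qchi (Dq m a b)) = int CARD('a) +
        (if a = 0 then (int CARD('a) - 1) * qchi (m^2-4) else - qchi (m^2-4))"
    proof (cases "a = 0")
      case True
      have "(\<Sum>b\<in>UNIV. qchi (Dq m a b)) = (\<Sum>b\<in>(UNIV::'a set). if b = 0 then 0 else qchi (m^2-4))"
      proof (rule sum.cong[OF refl])
        fix b :: 'a
        show "qchi (Dq m a b) = (if b = 0 then 0 else qchi (m^2-4))"
          using True chi_sqmul[of b "m^2-4"] by (simp add: Dq_zero mult.commute qchi_def)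
      qed
      also have "\<dots> = (int CARD('a) - 1) * qchi (m^2-4)" by (simp add: sum_if0)
      finally show ?thesis using True by simp
    next
      case False
      have "(\<Sum>b\<in>UNIV. qchi (Dq m a b)) = (\<Sum>s\<in>UNIV. qchi (Dq m a (a*s)))"
        by (rule sum_scale[OF False, symmetric])
      also have "\<dots> = (\<Sum>s\<in>UNIV. qchi ((m^2-4)*s^2 + (2*m^2+4*m)*s + (m^2-4)))"
        by (rule sum.cong[OF refl]) (simp add: Dq_scale chi_sqmul[OF False] Dq_one)
      also have "\<dots> = - qchi (m^2-4)"
        by (rule chi_quad_sum[OF two A0]) (use D0 in simp)
      finally show ?thesis using False by simp
    qed
  qed
  also have "\<dots> = int CARD('a) * int CARD('a)"
    by (simp add: sum.distrib sum_if0 algebra_simps)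
  finally show ?thesis by (simp add: power2_eq_square)
qed

definition T1 :: "'a::{field,finite} \<Rightarrow> int" where
  "T1 m = (\<Sum>s\<in>UNIV. qchi (s * Dq m 1 s))"

lemma P2:
  fixes m :: "'a::{field,finite}"
  assumes two: "(2::'a) \<noteq> 0"
  shows "(\<Sum>a\<in>(UNIV::'a set). \<Sum>b\<in>UNIV. \<Sum>c\<in>UNIV. of_bool (Qf m a b c = 0) * (qchi a * qchi b))
         = (int CARD('a) - 1) * T1 m"
proof -
  have "(\<Sum>a\<in>(UNIV::'a set). \<Sum>b\<in>UNIV. \<Sum>c\<in>UNIV. of_bool (Qf m a b c = 0) * (qchi a * qchi b))
      = (\<Sum>a\<in>(UNIV::'a set). \<Sum>b\<in>(UNIV::'a set). (qchi a * qchi b) * (1 + qchi (Dq m a b)))"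
  proof (intro sum.cong refl)
    fix a b :: 'a
    have "(\<Sum>c\<in>UNIV. of_bool (Qf m a b c = 0) * (qchi a * qchi b)) =
          (\<Sum>c\<in>UNIV. of_bool (Qf m a b c = 0) :: int) * (qchi a * qchi b)"
      by (rule sum_distrib_right[symmetric])
    also have "\<dots> = (qchi a * qchi b) * (1 + qchi (Dq m a b))"
      by (simp only: inner_c[OF two] mult.commute)
    finally show "(\<Sum>c\<in>UNIV. of_bool (Qf m a b c = 0) * (qchi a * qchi b)) =
          (qchi a * qchi b) * (1 + qchi (Dq m a b))" .
  qed
  also have "\<dots> = (\<Sum>a\<in>(UNIV::'a set). \<Sum>b\<in>(UNIV::'a set). qchi a * qchi b) +
                  (\<Sum>a\<in>(UNIV::'a set). \<Sum>b\<in>(UNIV::'a set). qchi (a * b * Dq m a b))"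
    by (simp add: distrib_left sum.distrib chi_mult[OF two])
  also have "(\<Sum>a\<in>(UNIV::'a set). \<Sum>b\<in>(UNIV::'a set). qchi a * qchi b) = 0"
    by (simp add: sum_distrib_left[symmetric] chi_sum0[OF two])
  also have "(\<Sum>a\<in>(UNIV::'a set). \<Sum>b\<in>(UNIV::'a set). qchi (a * b * Dq m a b)) =
             (\<Sum>a\<in>(UNIV::'a set). if a = 0 then 0 else T1 m)"
  proof (rule sum.cong[OF refl])
    fix a :: 'a
    show "(\<Sum>b\<in>UNIV. qchi (a * b * Dq m a b)) = (if a = 0 then 0 else T1 m)"
    proof (cases "a = 0")
      case True then show ?thesis by (simp add: qchi_def)
    next
      case False
      have "(\<Sum>b\<in>UNIV. qchi (a * b * Dq m a b)) = (\<Sum>s\<in>UNIV. qchi (a * (a*s) * Dq m a (a*s)))"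
        by (rule sum_scale[OF False, symmetric])
      also have "\<dots> = (\<Sum>s\<in>UNIV. qchi ((a^2)^2 * (s * Dq m 1 s)))"
      proof (rule sum.cong[OF refl])
        fix s :: 'a
        have "a * (a*s) * Dq m a (a*s) = (a^2)^2 * (s * Dq m 1 s)"
          unfolding Dq_scale by (simp add: power2_eq_square algebra_simps)
        thus "qchi (a * (a*s) * Dq m a (a*s)) = qchi ((a^2)^2 * (s * Dq m 1 s))" by (rule arg_cong)
      qed
      also have "\<dots> = T1 m" unfolding T1_def
        by (rule sum.cong[OF refl]) (rule chi_sqmul, use False in simp)
      finally show ?thesis using False by simp
    qed
  qed
  also have "(\<Sum>a\<in>(UNIV::'a set). if a = 0 then 0 else T1 m) = (int CARD('a) - 1) * T1 m"
    by (simp add: sum_if0)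
  finally show ?thesis by simp
qed

lemma Qf_rot: "Qf m b c a = Qf m a b c"
  by (simp add: Qf_def algebra_simps)

lemma Qf_scale: "Qf m (t*a) (t*b) (t*c) = t^2 * Qf m a b c"
  by (simp add: Qf_def power2_eq_square algebra_simps)

lemma odd_part:
  fixes m :: "'a::{field,finite}"
  assumes two: "(2::'a) \<noteq> 0"
  shows "(\<Sum>a\<in>(UNIV::'a set). \<Sum>b\<in>UNIV. \<Sum>c\<in>UNIV. of_bool (Qf m a b c = 0) *
            (qchi a + qchi b + qchi c + qchi a * qchi b * qchi c)) = 0"
proof -
  obtain t :: 'a where t: "qchi t = -1" using exists_nonsq[OF two] by blast
  hence t0: "t \<noteq> 0" by (auto simp: qchi_def)
  define f where "f a b c = of_bool (Qf m a b c = 0) *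
            (qchi a + qchi b + qchi c + qchi a * qchi b * qchi c)" for a b c :: 'a
  have ft: "f (t*a) (t*b) (t*c) = - f a b c" for a b c
  proof -
    have "Qf m (t*a) (t*b) (t*c) = 0 \<longleftrightarrow> Qf m a b c = 0" using t0 by (simp add: Qf_scale)
    hence "f (t*a) (t*b) (t*c) = of_bool (Qf m a b c = 0) *
            (qchi (t*a) + qchi (t*b) + qchi (t*c) + qchi (t*a) * qchi (t*b) * qchi (t*c))"
      unfolding f_def by simp
    also have "\<dots> = - f a b c" unfolding f_def using t by (simp add: chi_mult[OF two] algebra_simps)
    finally show ?thesis .
  qed
  have "(\<Sum>a\<in>(UNIV::'a set). \<Sum>b\<in>UNIV. \<Sum>c\<in>UNIV. f a b c) =
        (\<Sum>a\<in>(UNIV::'a set). \<Sum>b\<in>UNIV. \<Sum>c\<in>UNIV. f (t*a) (t*b) (t*c))"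
    by (rule sum3_scale[OF t0, symmetric])
  also have "\<dots> = - (\<Sum>a\<in>(UNIV::'a set). \<Sum>b\<in>UNIV. \<Sum>c\<in>UNIV. f a b c)"
    by (simp add: ft sum_negf)
  finally show ?thesis unfolding f_def by simp
qed

lemma NC:
  fixes m :: "'a::{field,finite}"
  assumes two: "(2::'a) \<noteq> 0" and A0: "m^2 - 4 \<noteq> 0"
    and D0: "(2*m^2+4*m)^2 - 4*(m^2-4)*(m^2-4) \<noteq> 0"
  shows "(\<Sum>x\<in>(UNIV::'a set). \<Sum>y\<in>UNIV. \<Sum>z\<in>UNIV. of_bool (Qf m (x^2) (y^2) (z^2) = 0))
         = int CARD('a) ^ 2 + 3 * ((int CARD('a) - 1) * T1 m)"
proof -
  define G where "G a b c = (of_bool (Qf m a b c = 0) :: int)" for a b c :: 'a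
  define t1 where "t1 a b c = G a b c * (qchi a * qchi b)" for a b c
  have r1: "(\<Sum>a\<in>(UNIV::'a set). \<Sum>b\<in>UNIV. \<Sum>c\<in>UNIV. t1 a b c) =
            (\<Sum>a\<in>(UNIV::'a set). \<Sum>b\<in>UNIV. \<Sum>c\<in>UNIV. t1 b c a)"
    by (rule sum3_rot)
  have r2: "(\<Sum>a\<in>(UNIV::'a set). \<Sum>b\<in>UNIV. \<Sum>c\<in>UNIV. t1 b c a) =
            (\<Sum>a\<in>(UNIV::'a set). \<Sum>b\<in>UNIV. \<Sum>c\<in>UNIV. t1 c a b)"
    by (rule sum3_rot)
  have g2: "G b c a = G a b c" for a b c
    by (simp add: G_def Qf_rot)
  have g3: "G c a b = G a b c" for a b c
    by (simp add: G_def Qf_rot)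
  have pt: "(1 + qchi a) * (1 + qchi b) * (1 + qchi c) * G a b c =
        G a b c + t1 a b c + t1 b c a + t1 c a b +
        G a b c * (qchi a + qchi b + qchi c + qchi a * qchi b * qchi c)" for a b c
  proof -
    have x2: "t1 b c a = G a b c * (qchi b * qchi c)"
      unfolding t1_def by (subst g2[where a=a and b=b and c=c]) (rule refl)
    have x3: "t1 c a b = G a b c * (qchi c * qchi a)"
      unfolding t1_def by (subst g3[where a=a and b=b and c=c]) (rule refl)
    show ?thesis by (subst x2, subst x3) (simp add: t1_def algebra_simps)
  qed
  have "(\<Sum>x\<in>(UNIV::'a set). \<Sum>y\<in>UNIV. \<Sum>z\<in>UNIV. of_bool (Qf m (x^2) (y^2) (z^2) = 0))
     = (\<Sum>a\<in>(UNIV::'a set). \<Sum>b\<in>UNIV. \<Sum>c\<in>UNIV. (1 + qchi a) * (1 + qchi b) * (1 + qchi c) * G a b c)"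
    using sum3_sq[OF two, of G] unfolding G_def by simp
  also have "\<dots> = (\<Sum>a\<in>(UNIV::'a set). \<Sum>b\<in>UNIV. \<Sum>c\<in>UNIV. G a b c)
      + (\<Sum>a\<in>(UNIV::'a set). \<Sum>b\<in>UNIV. \<Sum>c\<in>UNIV. t1 a b c)
      + (\<Sum>a\<in>(UNIV::'a set). \<Sum>b\<in>UNIV. \<Sum>c\<in>UNIV. t1 b c a)
      + (\<Sum>a\<in>(UNIV::'a set). \<Sum>b\<in>UNIV. \<Sum>c\<in>UNIV. t1 c a b)
      + (\<Sum>a\<in>(UNIV::'a set). \<Sum>b\<in>UNIV. \<Sum>c\<in>UNIV. G a b c * (qchi a + qchi b + qchi c + qchi a * qchi b * qchi c))"
    by (simp only: pt sum.distrib)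
  also have "(\<Sum>a\<in>(UNIV::'a set). \<Sum>b\<in>UNIV. \<Sum>c\<in>UNIV. G a b c * (qchi a + qchi b + qchi c + qchi a * qchi b * qchi c)) = 0"
    unfolding G_def by (rule odd_part[OF two])
  also have "(\<Sum>a\<in>(UNIV::'a set). \<Sum>b\<in>UNIV. \<Sum>c\<in>UNIV. G a b c) = int CARD('a) ^ 2"
    unfolding G_def by (rule P0[OF two A0 D0])
  also have "(\<Sum>a\<in>(UNIV::'a set). \<Sum>b\<in>UNIV. \<Sum>c\<in>UNIV. t1 a b c) = (int CARD('a) - 1) * T1 m"
    unfolding t1_def G_def by (rule P2[OF two])
  finally show ?thesis using r1 r2 P2[OF two, of m] unfolding t1_def G_def by simp
qed

definition Sx :: "'a::{field,finite} \<Rightarrow> int" where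
  "Sx lam = (\<Sum>x\<in>UNIV. qchi ((lam+3) * (x*(x-1)*(x-lam))))"

definition Tv :: "'a::{field,finite} \<Rightarrow> int" where
  "Tv lam = (\<Sum>v\<in>UNIV. qchi ((lam+3) * (v*(v^2 + 2*(lam+1)*v + (lam-1)^2))))"

lemma T1_eq:
  fixes lam :: "'a::{field,finite}"
  assumes l1: "lam \<noteq> 1"
  shows "T1 (lam+1) = Tv lam"
proof -
  define e where "e = inverse (lam - 1)"
  have L: "lam - 1 \<noteq> 0" using l1 by simp
  have e0: "e \<noteq> 0" using L unfolding e_def by simp
  have "T1 (lam+1) = (\<Sum>v\<in>UNIV. qchi ((e*v) * Dq (lam+1) 1 (e*v)))"
    unfolding T1_def by (rule sum_scale[OF e0, symmetric])
  also have "\<dots> = Tv lam" unfolding Tv_def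
  proof (rule sum.cong[OF refl])
    fix v :: 'a
    define L where "L = lam - 1"
    have eL: "e * L = 1" unfolding e_def L_def using L by simp
    have h1: "Dq (lam+1) 1 s = (lam+3)*(L*s^2 + 2*(lam+1)*s + L)" for s
      unfolding Dq_one L_def by (simp add: power2_eq_square algebra_simps)
    have a1: "L*(e*v)^2 = (e*L)*(e*v^2)" by (simp add: power2_eq_square algebra_simps)
    have a2: "L = (e*L)*L" using eL by simp
    have h2: "L*(e*v)^2 + 2*(lam+1)*(e*v) + L = e*(v^2 + 2*(lam+1)*v + L^2)"
    proof -
      have "(L*(e*v)^2 + 2*(lam+1)*(e*v) + L) - e*(v^2 + 2*(lam+1)*v + L^2) = (e*L - 1)*(e*v^2 - L)"
        by (simp add: power2_eq_square algebra_simps)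
      also have "\<dots> = 0" using eL by simp
      finally show ?thesis by simp
    qed
    have "(e*v) * Dq (lam+1) 1 (e*v) = (e*v) * ((lam+3) * (e*(v^2 + 2*(lam+1)*v + L^2)))"
      by (simp only: h1 h2)
    also have "\<dots> = e^2 * ((lam+3) * (v*(v^2 + 2*(lam+1)*v + (lam-1)^2)))"
      unfolding L_def by (simp add: power2_eq_square algebra_simps)
    finally have "(e*v) * Dq (lam+1) 1 (e*v) = e^2 * ((lam+3) * (v*(v^2 + 2*(lam+1)*v + (lam-1)^2)))" .
    thus "qchi ((e*v) * Dq (lam+1) 1 (e*v)) = qchi ((lam+3) * (v*(v^2 + 2*(lam+1)*v + (lam-1)^2)))"
      by (simp only: chi_sqmul[OF e0])
  qed
  finally show ?thesis .
qed

lemma S_eq: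
  fixes lam :: "'a::{field,finite}"
  assumes two: "(2::'a) \<noteq> 0" and l0: "lam \<noteq> 0" and k0: "lam + 3 \<noteq> 0"
  shows "Sx lam = Tv lam"
proof -
  define k where "k = lam + 3"
  define g where "g t = qchi (k * (t - (lam+1)))" for t
  have "Sx lam = (\<Sum>x\<in>UNIV. if x = 0 then 0 else g (x + lam/x))"
    unfolding Sx_def
  proof (rule sum.cong[OF refl])
    fix x :: 'a
    show "qchi ((lam+3) * (x*(x-1)*(x-lam))) = (if x = 0 then 0 else g (x + lam/x))"
    proof (cases "x = 0")
      case True then show ?thesis by (simp add: qchi_def)
    next
      case False
      have "(lam+3) * (x*(x-1)*(x-lam)) = x^2 * (k * ((x + lam/x) - (lam+1)))"
        unfolding k_def using False by (simp add: field_simps power2_eq_square)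
      thus ?thesis using False chi_sqmul[OF False] unfolding g_def by simp
    qed
  qed
  also have "\<dots> = (\<Sum>x\<in>UNIV. \<Sum>t\<in>UNIV. of_bool (x \<noteq> 0 \<and> x + lam/x = t) * g t)"
    by (rule sum.cong[OF refl]) simp
  also have "\<dots> = (\<Sum>t\<in>UNIV. \<Sum>x\<in>UNIV. of_bool (x \<noteq> 0 \<and> x + lam/x = t) * g t)"
    by (rule sum.swap)
  also have "\<dots> = (\<Sum>t\<in>UNIV. g t * (1 + qchi (t^2 - 4*lam)))"
  proof (rule sum.cong[OF refl])
    fix t :: 'a
    have iff: "(x \<noteq> 0 \<and> x + lam/x = t) \<longleftrightarrow> (1*x^2 + (-t)*x + lam = 0)" for x
    proof (cases "x = 0")
      case True then show ?thesis using l0 by simp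
    next
      case False
      have "x + lam/x = t \<longleftrightarrow> x^2 + lam = t * x" using False
        by (simp add: field_simps power2_eq_square)
      thus ?thesis using False by (auto simp: algebra_simps)
    qed
    have "(\<Sum>x\<in>UNIV. of_bool (x \<noteq> 0 \<and> x + lam/x = t) * g t) = (\<Sum>x\<in>UNIV. of_bool (x \<noteq> 0 \<and> x + lam/x = t) :: int) * g t"
      by (rule sum_distrib_right[symmetric])
    also have "(\<Sum>x\<in>UNIV. of_bool (x \<noteq> 0 \<and> x + lam/x = t) :: int) = (\<Sum>x\<in>UNIV. of_bool (1*x^2 + (-t)*x + lam = 0))"
      by (simp only: iff)
    also have "\<dots> = 1 + qchi ((-t)^2 - 4*1*lam)" by (rule quad_count[OF two]) simp
    finally show "(\<Sum>x\<in>UNIV. of_bool (x \<noteq> 0 \<and> x + lam/x = t) * g t) = g t * (1 + qchi (t^2 - 4*lam))"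
      by simp
  qed
  also have "\<dots> = (\<Sum>t\<in>UNIV. g t) + (\<Sum>t\<in>UNIV. qchi (k * (t - (lam+1)) * (t^2 - 4*lam)))"
    unfolding g_def by (simp add: distrib_left sum.distrib chi_mult[OF two])
  also have "(\<Sum>t\<in>UNIV. g t) = 0"
  proof -
    have "(\<Sum>t\<in>UNIV. g t) = (\<Sum>t\<in>UNIV. qchi (k * t + (-(k*(lam+1)))))"
      unfolding g_def by (simp add: algebra_simps)
    also have "\<dots> = 0" using sum_affine[of k qchi "-(k*(lam+1))"] k0 chi_sum0[OF two]
      unfolding k_def by simp
    finally show ?thesis .
  qed
  also have "(\<Sum>t\<in>UNIV. qchi (k * (t - (lam+1)) * (t^2 - 4*lam))) =
             (\<Sum>v\<in>UNIV. qchi (k * ((1*v + (lam+1)) - (lam+1)) * ((1*v + (lam+1))^2 - 4*lam)))"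
    by (rule sum_affine[symmetric]) simp
  also have "\<dots> = Tv lam" unfolding Tv_def k_def
    by (rule sum.cong[OF refl]) (simp add: power2_eq_square algebra_simps)
  finally show ?thesis by simp
qed

lemma NE:
  fixes lam :: "'a::{field,finite}"
  assumes two: "(2::'a) \<noteq> 0" and k0: "lam + 3 \<noteq> 0"
  shows "(\<Sum>x\<in>(UNIV::'a set). \<Sum>y\<in>UNIV. \<Sum>z\<in>UNIV.
            of_bool ((lam + 3) * y^2 * z - x * (x - z) * (x - lam * z) = 0))
         = int CARD('a) + (int CARD('a) - 1) * (int CARD('a) + Sx lam)"
proof -
  define f where "f x y z = (of_bool ((lam + 3) * y^2 * z - x * (x - z) * (x - lam * z) = 0) :: int)" for x y z :: 'a
  have "(\<Sum>x\<in>(UNIV::'a set). \<Sum>y\<in>UNIV. \<Sum>z\<in>UNIV. f x y z) = (\<Sum>z\<in>(UNIV::'a set). \<Sum>x\<in>UNIV. \<Sum>y\<in>UNIV. f x y z)"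
    by (rule sum3_rot)
  also have "\<dots> = (\<Sum>z\<in>(UNIV::'a set). if z = 0 then int CARD('a) else int CARD('a) + Sx lam)"
  proof (rule sum.cong[OF refl])
    fix z :: 'a
    show "(\<Sum>x\<in>UNIV. \<Sum>y\<in>UNIV. f x y z) = (if z = 0 then int CARD('a) else int CARD('a) + Sx lam)"
    proof (cases "z = 0")
      case True
      have "(\<Sum>x\<in>UNIV. \<Sum>y\<in>UNIV. f x y z) = (\<Sum>x\<in>(UNIV::'a set). \<Sum>y\<in>(UNIV::'a set). of_bool (x = 0))"
        unfolding f_def using True by simp
      also have "\<dots> = int CARD('a)" by simp
      finally show ?thesis using True by simp
    next
      case False
      have "(\<Sum>x\<in>UNIV. \<Sum>y\<in>UNIV. f x y z) = (\<Sum>u\<in>UNIV. \<Sum>y\<in>UNIV. f (z*u) y z)"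
        by (rule sum_scale[OF False, symmetric])
      also have "\<dots> = (\<Sum>u\<in>UNIV. \<Sum>v\<in>UNIV. f (z*u) (z*v) z)"
        by (rule sum.cong[OF refl]) (rule sum_scale[OF False, symmetric])
      also have "\<dots> = (\<Sum>u\<in>UNIV. \<Sum>v\<in>UNIV. of_bool ((lam+3)*v^2 + 0*v + (-(u*(u-1)*(u-lam))) = 0))"
      proof (intro sum.cong refl)
        fix u v :: 'a
        have "(lam + 3) * (z*v)^2 * z - (z*u) * (z*u - z) * (z*u - lam * z) =
              z^3 * ((lam+3)*v^2 + 0*v + (-(u*(u-1)*(u-lam))))"
          by (simp add: power2_eq_square power3_eq_cube algebra_simps)
        thus "f (z*u) (z*v) z = of_bool ((lam+3)*v^2 + 0*v + (-(u*(u-1)*(u-lam))) = 0)"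
          unfolding f_def using False by simp
      qed
      also have "\<dots> = (\<Sum>u\<in>(UNIV::'a set). 1 + qchi ((lam+3) * (u*(u-1)*(u-lam))))"
      proof (rule sum.cong[OF refl])
        fix u :: 'a
        have "(\<Sum>v\<in>UNIV. of_bool ((lam+3)*v^2 + 0*v + (-(u*(u-1)*(u-lam))) = 0) :: int) =
              1 + qchi (0^2 - 4*(lam+3)*(-(u*(u-1)*(u-lam))))"
          by (rule quad_count[OF two k0])
        also have "0^2 - 4*(lam+3)*(-(u*(u-1)*(u-lam))) = 4 * ((lam+3) * (u*(u-1)*(u-lam)))"
          by (simp add: algebra_simps)
        finally show "(\<Sum>v\<in>UNIV. of_bool ((lam+3)*v^2 + 0*v + (-(u*(u-1)*(u-lam))) = 0) :: int) =
              1 + qchi ((lam+3) * (u*(u-1)*(u-lam)))" by (simp add: chi_4[OF two])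
      qed
      also have "\<dots> = int CARD('a) + Sx lam" unfolding Sx_def by (simp add: sum.distrib)
      finally show ?thesis using False by simp
    qed
  qed
  also have "\<dots> = int CARD('a) + (int CARD('a) - 1) * (int CARD('a) + Sx lam)"
    by (rule sum_if0)
  finally show ?thesis unfolding f_def .
qed

theorem mainTheorem2:
  fixes lam :: "'a::{field,finite}"
  assumes "odd CARD('a)"
    and "lam \<noteq> 0" and "lam \<noteq> 1" and "lam \<noteq> -3"
  shows "int (card (proj_zeros (\<lambda>(x,y,z). x^4 + y^4 + z^4
              - (lam + 1) * (x^2*y^2 + y^2*z^2 + z^2*x^2))))
       = 3 * int (card (proj_zeros (\<lambda>(x,y,z). (lam + 3) * y^2 * z
              - x * (x - z) * (x - lam * z))))
         - 2 * int CARD('a) - 2"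
proof -
  have two: "(2::'a) \<noteq> 0" by (rule two_ne_zero_odd[OF assms(1)])
  have l0: "lam \<noteq> 0" and l1: "lam \<noteq> 1" using assms by auto
  have k0: "lam + 3 \<noteq> 0"
  proof
    assume "lam + 3 = 0" hence "lam = -3" by (simp add: eq_neg_iff_add_eq_0)
    thus False using assms(4) by simp
  qed
  define q where "q = int CARD('a)"
  have q2: "q \<ge> 2"
  proof -
    have "{0::'a, 1} \<subseteq> UNIV" by simp
    hence "card {0::'a, 1} \<le> CARD('a)" by (intro card_mono) auto
    thus ?thesis unfolding q_def by simp
  qed
  define FC :: "'a \<times> 'a \<times> 'a \<Rightarrow> 'a" where "FC = (\<lambda>(x,y,z). x^4 + y^4 + z^4
              - (lam + 1) * (x^2*y^2 + y^2*z^2 + z^2*x^2))"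
  define FE :: "'a \<times> 'a \<times> 'a \<Rightarrow> 'a" where "FE = (\<lambda>(x,y,z). (lam + 3) * y^2 * z
              - x * (x - z) * (x - lam * z))"
  have FCq: "FC (x,y,z) = Qf (lam+1) (x^2) (y^2) (z^2)" for x y z
    unfolding FC_def Qf_def by (simp add: power2_eq_square power4_eq_xxxx algebra_simps)
  have homC: "FC (c*x, c*y, c*z) = 0 \<longleftrightarrow> FC (x,y,z) = 0" if c: "c \<noteq> 0" for c x y z
  proof -
    have "FC (c*x, c*y, c*z) = c^4 * FC (x,y,z)"
      unfolding FC_def by (simp add: power2_eq_square power4_eq_xxxx algebra_simps)
    thus ?thesis using c by simp
  qed
  have homE: "FE (c*x, c*y, c*z) = 0 \<longleftrightarrow> FE (x,y,z) = 0" if c: "c \<noteq> 0" for c x y z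
  proof -
    have "FE (c*x, c*y, c*z) = c^3 * FE (x,y,z)"
      unfolding FE_def by (simp add: power2_eq_square power3_eq_cube algebra_simps)
    thus ?thesis using c by simp
  qed
  have cnt: "int (card {p. p \<noteq> (0,0,0) \<and> F p = 0}) = int (card {p. F p = 0}) - 1"
    if F0: "F (0,0,0) = 0" for F :: "'a \<times> 'a \<times> 'a \<Rightarrow> 'a"
  proof -
    have "{p. F p = 0} = insert (0,0,0) {p. p \<noteq> (0,0,0) \<and> F p = 0}" using F0 by auto
    hence "card {p. F p = 0} = Suc (card {p. p \<noteq> (0,0,0) \<and> F p = 0})" by simp
    thus ?thesis by simp
  qed
  have m4: "(lam+1)^2 - 4 \<noteq> 0"
  proof -
    have "(lam+1)^2 - 4 = (lam+3)*(lam-1)" by (simp add: power2_eq_square algebra_simps)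
    thus ?thesis using k0 l1 by simp
  qed
  have D0: "(2*(lam+1)^2+4*(lam+1))^2 - 4*((lam+1)^2-4)*((lam+1)^2-4) \<noteq> 0"
  proof -
    have "(2*(lam+1)^2+4*(lam+1))^2 - 4*((lam+1)^2-4)*((lam+1)^2-4) = 2^4 * ((lam+3)^2 * lam)"
      by (simp add: power2_eq_square algebra_simps)
    moreover have "(2::'a)^4 \<noteq> 0" using two by (rule power_not_zero)
    moreover have "(lam+3)^2 * lam \<noteq> 0" using k0 l0 by simp
    ultimately show ?thesis by (metis mult_eq_0_iff)
  qed
  have NCc: "int (card {p. FC p = 0}) = q^2 + 3 * ((q - 1) * Tv lam)"
  proof -
    have "int (card {p. FC p = 0}) = (\<Sum>x\<in>UNIV. \<Sum>y\<in>UNIV. \<Sum>z\<in>UNIV. of_bool (FC (x,y,z) = 0))"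
      by (rule card3)
    also have "\<dots> = (\<Sum>x\<in>(UNIV::'a set). \<Sum>y\<in>UNIV. \<Sum>z\<in>UNIV. of_bool (Qf (lam+1) (x^2) (y^2) (z^2) = 0))"
      by (simp only: FCq)
    also have "\<dots> = q^2 + 3 * ((q - 1) * T1 (lam+1))"
      unfolding q_def by (rule NC[OF two m4 D0])
    finally show ?thesis using T1_eq[OF l1] by simp
  qed
  have C: "int (card (proj_zeros FC)) * (q - 1) = (q + 1 + 3 * Tv lam) * (q - 1)"
  proof -
    have "int (card (proj_zeros FC) * (CARD('a) - 1)) = int (card {p. p \<noteq> (0,0,0) \<and> FC p = 0})"
      using proj_count[of FC] homC by auto
    also have "\<dots> = int (card {p. FC p = 0}) - 1" by (rule cnt) (simp add: FC_def)
    finally have "int (card (proj_zeros FC)) * (q - 1) = q^2 + 3 * ((q - 1) * Tv lam) - 1"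
      using NCc q2 unfolding q_def by (simp add: of_nat_diff)
    thus ?thesis by (simp add: power2_eq_square algebra_simps)
  qed
  have Cc: "int (card (proj_zeros FC)) = q + 1 + 3 * Tv lam" using C q2 by simp
  have NEc: "int (card {p. FE p = 0}) = q + (q - 1) * (q + Sx lam)"
  proof -
    have "int (card {p. FE p = 0}) = (\<Sum>x\<in>UNIV. \<Sum>y\<in>UNIV. \<Sum>z\<in>UNIV. of_bool (FE (x,y,z) = 0))"
      by (rule card3)
    also have "\<dots> = (\<Sum>x\<in>(UNIV::'a set). \<Sum>y\<in>UNIV. \<Sum>z\<in>UNIV.
            of_bool ((lam + 3) * y^2 * z - x * (x - z) * (x - lam * z) = 0))"
      unfolding FE_def by simp
    also have "\<dots> = q + (q - 1) * (q + Sx lam)" unfolding q_def by (rule NE[OF two k0])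
    finally show ?thesis .
  qed
  have E: "int (card (proj_zeros FE)) * (q - 1) = (q + 1 + Sx lam) * (q - 1)"
  proof -
    have "int (card (proj_zeros FE) * (CARD('a) - 1)) = int (card {p. p \<noteq> (0,0,0) \<and> FE p = 0})"
      using proj_count[of FE] homE by auto
    also have "\<dots> = int (card {p. FE p = 0}) - 1" by (rule cnt) (simp add: FE_def)
    finally have "int (card (proj_zeros FE)) * (q - 1) = q + (q - 1) * (q + Sx lam) - 1"
      using NEc q2 unfolding q_def by (simp add: of_nat_diff)
    thus ?thesis by (simp add: algebra_simps)
  qed
  have Ec: "int (card (proj_zeros FE)) = q + 1 + Sx lam" using E q2 by simp
  have ST: "Sx lam = Tv lam" by (rule S_eq[OF two l0 k0])
  show ?thesis using Cc Ec ST unfolding FC_def FE_def q_def by simp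
qed

end
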